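(* Let $G=\sum_{i=1}^h C_{2m_i}+\sum_{j=1}^k C_{2n_j+1}$ (disjoint union of cycles), where $h,k\ge0$, $h+k\ge1$, $m_i\ge2$ and $n_j\ge1$, and let $p=|V(G)|$. Then $str(G)=\max\{p+2,\ p+1+k\}$.
   Context: $C_n$ denotes the cycle on $n$ vertices and $+$ disjoint union (an empty sum is omitted). For a graph $G$ of order $p$, a numbering is a bijection $f:V(G)\to[1,p]$; $str_f(G)=\max\{f(u)+f(v): uv\in E(G)\}$ and $str(G)=\min_f str_f(G)$. *)

theory Defs
  imports Main
begin

(* A graph is given by a vertex set V and a set E of (unordered) edges,
   each edge represented by an ordered pair (u,v) of endpoints. *)

definition numberings :: "'a set \<Rightarrow> ('a \<Rightarrow> nat) set" where
  "numberings V = {f. bij_betw f V {1..card V}}"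

definition str_f :: "('a \<times> 'a) set \<Rightarrow> ('a \<Rightarrow> nat) \<Rightarrow> nat" where
  "str_f E f = Max {f u + f v | u v. (u, v) \<in> E}"

definition str :: "'a set \<Rightarrow> ('a \<times> 'a) set \<Rightarrow> nat" where
  "str V E = Min (str_f E ` numberings V)"

(* Disjoint union of cycles C_{L!0} + C_{L!1} + ...: vertex (c,i) is the
   i-th vertex of the c-th cycle. *)
definition cyc_verts :: "nat list \<Rightarrow> (nat \<times> nat) set" where
  "cyc_verts L = {(c, i). c < length L \<and> i < L ! c}"

definition cyc_edges :: "nat list \<Rightarrow> ((nat \<times> nat) \<times> (nat \<times> nat)) set" where
  "cyc_edges L = {((c, i), (c, Suc i mod (L ! c))) | c i. c < length L \<and> i < L ! c}"

end

theory Submission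
  imports Defs
begin

definition PL :: "nat list \<Rightarrow> nat" where "PL L = (\<Sum>c<length L. L!c)"
definition KL :: "nat list \<Rightarrow> nat" where "KL L = (\<Sum>c<length L. L!c mod 2)"

lemma verts_Sigma: "cyc_verts L = Sigma {..<length L} (\<lambda>c. {..<L!c})"
  by (auto simp: cyc_verts_def)

lemma card_verts: "card (cyc_verts L) = PL L"
  by (simp add: verts_Sigma PL_def)

lemma finite_verts: "finite (cyc_verts L)"
  by (simp add: verts_Sigma)

lemma edges_image: "cyc_edges L = (\<lambda>(c,i). ((c,i),(c, Suc i mod L!c))) ` cyc_verts L"
  by (auto simp: cyc_edges_def cyc_verts_def)

lemma finite_edges: "finite (cyc_edges L)"
  by (simp add: edges_image finite_verts)

lemma edges_in: "(u,v) \<in> cyc_edges L \<Longrightarrow> u \<in> cyc_verts L \<and> v \<in> cyc_verts L"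
  by (auto simp: cyc_edges_def cyc_verts_def)



lemma edge_set_eq: "{f u + f v | u v. (u, v) \<in> E} = (\<lambda>(u,v). f u + f v) ` E"
  by auto

lemma str_f_ge: "(u,v) \<in> cyc_edges L \<Longrightarrow> f u + f v \<le> str_f (cyc_edges L) f"
  unfolding str_f_def edge_set_eq
  by (rule Max_ge) (auto simp: finite_edges)

lemma str_f_le: "cyc_edges L \<noteq> {} \<Longrightarrow> (\<And>u v. (u,v) \<in> cyc_edges L \<Longrightarrow> f u + f v \<le> s) \<Longrightarrow> str_f (cyc_edges L) f \<le> s"
  unfolding str_f_def edge_set_eq
  by (subst Max_le_iff) (auto simp: finite_edges)

lemma PL_split: "PL L = 2 * (\<Sum>c<length L. L!c div 2) + KL L"
proof -
  show ?thesis unfolding PL_def KL_def sum_distrib_left sum.distrib[symmetric] by simp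
qed

lemma lower_a:
  assumes f: "f \<in> numberings (cyc_verts L)" and L3: "\<forall>c<length L. L!c \<ge> 3"
    and ne: "length L \<ge> 1"
  shows "PL L + 2 \<le> str_f (cyc_edges L) f"
proof -
  let ?V = "cyc_verts L" let ?E = "cyc_edges L" let ?p = "PL L"
  have bij: "bij_betw f ?V {1..?p}" using f by (simp add: numberings_def card_verts)
  have "0 < length L" using ne by (cases L) auto
  then have "L!0 \<ge> 3" using L3 by auto
  then have "(0,0) \<in> ?V" using \<open>0 < length L\<close> by (auto simp: cyc_verts_def)
  then have "f (0,0) \<in> {1..?p}" using bij by (auto simp: bij_betw_def)
  then have "?p \<in> {1..?p}" by simp
  then obtain v where v: "v \<in> ?V" "f v = ?p" using bij by (metis bij_betw_iff_bijections)
  obtain c i where ci: "v = (c,i)" by (cases v)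
  define l where "l = L!c"
  have cl: "c < length L" "i < l" using v ci by (auto simp: cyc_verts_def l_def)
  have l3: "l \<ge> 3" using L3 cl l_def by auto
  define j where "j = (if i = 0 then l - 1 else i - 1)"
  have jl: "j < l" "Suc j mod l = i" using cl l3 by (auto simp: j_def)
  have e1: "((c,i),(c, Suc i mod l)) \<in> ?E" using cl by (auto simp: cyc_edges_def l_def)
  have e2: "((c,j),(c, i)) \<in> ?E" using cl jl
    by (auto simp: cyc_edges_def l_def intro!: exI[of _ j]) 
  have neq: "Suc i mod l \<noteq> j" using cl l3 by (auto simp: j_def mod_if split: if_splits)
  have in1: "(c, Suc i mod l) \<in> ?V" using e1 edges_in by blast
  have in2: "(c, j) \<in> ?V" using e2 edges_in by blast
  have "f (c, Suc i mod l) \<noteq> f (c,j)"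
    using bij in1 in2 neq by (auto simp: bij_betw_def inj_on_def)
  moreover have "f (c, Suc i mod l) \<ge> 1" "f (c,j) \<ge> 1"
    using bij in1 in2 by (auto simp: bij_betw_def)
  ultimately have "f (c, Suc i mod l) \<ge> 2 \<or> f (c,j) \<ge> 2" by auto
  moreover have "f (c,i) + f (c, Suc i mod l) \<le> str_f ?E f" using e1 str_f_ge by blast
  moreover have "f (c,j) + f (c,i) \<le> str_f ?E f" using e2 str_f_ge by blast
  ultimately show ?thesis using v ci by auto
qed

lemma suc_mod: "(a::nat) < l \<Longrightarrow> Suc a mod l = (if Suc a = l then 0 else Suc a)"
  by (cases "Suc a = l") simp_all
lemma cycle_indep_card:
  assumes l2: "l \<ge> 2" and X: "X \<subseteq> {..<l}"
    and ind: "\<And>i. i \<in> X \<Longrightarrow> Suc i mod l \<notin> X"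
  shows "2 * card X \<le> l"
proof -
  have inj: "inj_on (\<lambda>i. Suc i mod l) X"
  proof (rule inj_onI)
    fix a b assume "a \<in> X" "b \<in> X" "Suc a mod l = Suc b mod l"
    then have "a < l" "b < l" using X by auto
    then show "a = b" using suc_mod[of a l] suc_mod[of b l] \<open>Suc a mod l = Suc b mod l\<close>
      by (simp split: if_splits)
  qed
  have sub: "(\<lambda>i. Suc i mod l) ` X \<subseteq> {..<l} - X" using ind l2 by auto
  have "card X = card ((\<lambda>i. Suc i mod l) ` X)" using card_image[OF inj] by simp
  also have "\<dots> \<le> card ({..<l} - X)" by (rule card_mono) (use sub in auto)
  also have "\<dots> = l - card X" using X by (simp add: card_Diff_subset finite_subset)
  finally show ?thesis by linarith
qed

lemma aux_set: "(p::nat) + 2 \<le> s \<Longrightarrow> {x \<in> {1..p}. s \<le> 2 * x} = {(s+1) div 2..p}"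
  by auto
lemma aux_ar: assumes "(c::nat) \<le> D" "p = 2 * D + k" "c = Suc p - (s+1) div 2" shows "p + 1 + k \<le> s"
proof (rule ccontr)
  assume "\<not> ?thesis"
  then have "s + 1 \<le> 2*(D+k) + 1" using assms(2) by simp
  then have "(s+1) div 2 \<le> (2*(D+k)+1) div 2" by (rule div_le_mono)
  also have "\<dots> = D + k" by simp
  finally show False using assms by linarith
qed
lemma lower_b:
  assumes f: "f \<in> numberings (cyc_verts L)" and L3: "\<forall>c<length L. L!c \<ge> 3"
    and ne: "length L \<ge> 1"
  shows "PL L + 1 + KL L \<le> str_f (cyc_edges L) f"
proof -
  let ?V = "cyc_verts L" let ?E = "cyc_edges L" let ?p = "PL L"
  define s where "s = str_f ?E f"
  have s2: "?p + 2 \<le> s" using lower_a[OF assms] s_def by simp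
  have bij: "bij_betw f ?V {1..?p}" using f by (simp add: numberings_def card_verts)
  define Xc where "Xc c = {i. i < L!c \<and> s \<le> 2 * f (c,i)}" for c
  define X where "X = {v \<in> ?V. s \<le> 2 * f v}"
  have XS: "X = Sigma {..<length L} Xc" by (auto simp: X_def Xc_def cyc_verts_def)
  have cXc: "2 * card (Xc c) \<le> L!c" if c: "c < length L" for c
  proof (rule cycle_indep_card)
    show "2 \<le> L!c" using L3 c by force
    show "Xc c \<subseteq> {..<L!c}" by (auto simp: Xc_def)
    fix i assume i: "i \<in> Xc c"
    show "Suc i mod L!c \<notin> Xc c"
    proof
      assume j: "Suc i mod L!c \<in> Xc c"
      have e: "((c,i),(c, Suc i mod L!c)) \<in> ?E" using i c by (auto simp: Xc_def cyc_edges_def)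
      then have le: "f (c,i) + f (c, Suc i mod L!c) \<le> s" using str_f_ge s_def by blast
      have "f (c,i) = f (c, Suc i mod L!c)" using le i j by (auto simp: Xc_def)
      moreover have "(c,i) \<in> ?V" "(c, Suc i mod L!c) \<in> ?V" using e edges_in by blast+
      ultimately have "i = Suc i mod L!c" using bij by (auto simp: bij_betw_def inj_on_def)
      moreover have "L!c \<ge> 3" using L3 c by auto
      ultimately show False using i suc_mod[of i "L!c"] by (simp add: Xc_def split: if_splits)
    qed
  qed
  have "card X = (\<Sum>c<length L. card (Xc c))" unfolding XS
    by (rule card_SigmaI) (auto simp: Xc_def)
  also have "2 * \<dots> \<le> 2 * (\<Sum>c<length L. L!c div 2)"
    using cXc by (intro mult_le_mono2 sum_mono) fastforce
  finally have cX: "card X \<le> (\<Sum>c<length L. L!c div 2)" by linarith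
  have XV: "X \<subseteq> ?V" by (auto simp: X_def)
  have injX: "inj_on f X" using bij XV unfolding bij_betw_def by (blast intro: inj_on_subset)
  have imV: "f ` ?V = {1..?p}" using bij unfolding bij_betw_def by blast
  have "f ` X = {x \<in> f ` ?V. s \<le> 2 * x}" unfolding X_def by auto
  also have "\<dots> = {x \<in> {1..?p}. s \<le> 2 * x}" using imV by simp
  also have "\<dots> = {(s+1) div 2..?p}" using aux_set[OF s2] .
  finally have "card X = Suc ?p - (s+1) div 2"
    using card_image[OF injX] by simp
  then show ?thesis using aux_ar[OF cX PL_split[of L]] unfolding s_def[symmetric] by blast
qed

definition AL :: "nat list \<Rightarrow> nat \<Rightarrow> nat" where "AL L c = (\<Sum>d<c. (L!d + 1) div 2)"
definition BL :: "nat list \<Rightarrow> nat \<Rightarrow> nat" where "BL L c = (\<Sum>d<c. L!d div 2)"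
definition OL :: "nat list \<Rightarrow> nat \<Rightarrow> nat" where "OL L c = (\<Sum>d<c. L!d mod 2)"
definition lab :: "nat list \<Rightarrow> nat \<times> nat \<Rightarrow> nat" where
  "lab L v = (if even (snd v) then AL L (fst v) + snd v div 2 + 1 else PL L - BL L (fst v) - snd v div 2)"

lemma even_suc_div: "even (i::nat) \<Longrightarrow> Suc i div 2 = i div 2" by (auto elim: evenE)
lemma odd_suc_div: "odd (i::nat) \<Longrightarrow> Suc i div 2 = Suc (i div 2)" by (auto elim: oddE)

lemma AB: "AL L c = BL L c + OL L c"
proof -
  have "AL L c = (\<Sum>d<c. L!d div 2 + L!d mod 2)" unfolding AL_def
    by (intro sum.cong refl) presburger
  then show ?thesis by (simp add: sum.distrib BL_def OL_def)
qed

lemma QH: "AL L (length L) + BL L (length L) = PL L"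
proof -
  have "AL L (length L) + BL L (length L) = (\<Sum>d<length L. (L!d + 1) div 2 + L!d div 2)"
    by (simp add: AL_def BL_def sum.distrib)
  also have "\<dots> = PL L" unfolding PL_def by (intro sum.cong refl) presburger
  finally show ?thesis .
qed

lemma Q2: "2 * AL L (length L) = PL L + KL L"
  using AB[of L "length L"] PL_split[of L] unfolding OL_def KL_def BL_def by simp

lemma psum_mono: "c < c' \<Longrightarrow> (\<Sum>d<c. w d) + w c \<le> (\<Sum>d<c'. (w::nat\<Rightarrow>nat) d)"
proof -
  assume "c < c'"
  then have "{..<Suc c} \<subseteq> {..<c'}" by auto
  then have "(\<Sum>d<Suc c. w d) \<le> (\<Sum>d<c'. w d)" by (intro sum_mono2) auto
  then show ?thesis by simp
qed

lemma psum_inj: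
  assumes "(\<Sum>d<c. w d) + x = (\<Sum>d<c'. (w::nat\<Rightarrow>nat) d) + x'" "x < w c" "x' < w c'"
  shows "c = c' \<and> x = x'"
proof (cases c c' rule: linorder_cases)
  case less then show ?thesis using psum_mono[OF less, of w] assms by linarith
next
  case greater then show ?thesis using psum_mono[OF greater, of w] assms by linarith
next
  case equal then show ?thesis using assms by simp
qed

lemma vert_bounds:
  assumes c: "c < length L" and i: "i < L!c"
  shows "even i \<Longrightarrow> AL L c + i div 2 + 1 \<le> AL L (length L)"
    and "odd i \<Longrightarrow> BL L c + i div 2 + 1 \<le> BL L (length L)"
proof -
  assume e: "even i"
  have "i div 2 < (L!c + 1) div 2" using i e by (auto elim!: evenE)
  moreover have "AL L c + (L!c + 1) div 2 \<le> AL L (length L)"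
    using psum_mono[OF c, of "\<lambda>d. (L!d+1) div 2"] unfolding AL_def by simp
  ultimately show "AL L c + i div 2 + 1 \<le> AL L (length L)" by linarith
next
  assume e: "odd i"
  have "i div 2 < L!c div 2" using i e by (auto elim!: oddE)
  moreover have "BL L c + L!c div 2 \<le> BL L (length L)"
    using psum_mono[OF c, of "\<lambda>d. L!d div 2"] unfolding BL_def by simp
  ultimately show "BL L c + i div 2 + 1 \<le> BL L (length L)" by linarith
qed

lemma lab_range:
  assumes v: "v \<in> cyc_verts L"
  shows "1 \<le> lab L v \<and> lab L v \<le> PL L"
    and "even (snd v) \<Longrightarrow> lab L v \<le> AL L (length L)"
    and "odd (snd v) \<Longrightarrow> AL L (length L) < lab L v"
proof -
  obtain c i where ci: "v = (c,i)" "c < length L" "i < L!c" using v by (auto simp: cyc_verts_def)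
  note QH[of L]
  show "1 \<le> lab L v \<and> lab L v \<le> PL L"
  proof (cases "even i")
    case True with vert_bounds(1)[OF ci(2,3)] QH[of L] show ?thesis by (simp add: lab_def ci)
  next
    case False with vert_bounds(2)[OF ci(2,3)] QH[of L] show ?thesis by (simp add: lab_def ci)
  qed
  show "even (snd v) \<Longrightarrow> lab L v \<le> AL L (length L)"
    using vert_bounds(1)[OF ci(2,3)] by (simp add: lab_def ci)
  show "odd (snd v) \<Longrightarrow> AL L (length L) < lab L v"
    using vert_bounds(2)[OF ci(2,3)] QH[of L] by (simp add: lab_def ci)
qed

lemma lab_inj: "inj_on (lab L) (cyc_verts L)"
proof (rule inj_onI)
  fix u v assume u: "u \<in> cyc_verts L" and v: "v \<in> cyc_verts L" and eq: "lab L u = lab L v"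
  obtain c i where ci: "u = (c,i)" "c < length L" "i < L!c" using u by (auto simp: cyc_verts_def)
  obtain c' i' where ci': "v = (c',i')" "c' < length L" "i' < L!c'" using v by (auto simp: cyc_verts_def)
  show "u = v"
  proof (cases "even i"; cases "even i'")
    assume e: "even i" "even i'"
    have "AL L c + i div 2 = AL L c' + i' div 2" using eq e by (simp add: lab_def ci ci')
    moreover have "i div 2 < (L!c+1) div 2" "i' div 2 < (L!c'+1) div 2"
      using e ci ci' by (auto elim!: evenE)
    ultimately have "c = c' \<and> i div 2 = i' div 2"
      using psum_inj[where w="\<lambda>d. (L!d+1) div 2"] unfolding AL_def by blast
    then show ?thesis using e ci ci' by (auto elim!: evenE)
  next
    assume e: "odd i" "odd i'"
    have b1: "BL L c + i div 2 + 1 \<le> PL L" using vert_bounds(2)[OF ci(2,3)] e QH[of L] by simp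
    have b2: "BL L c' + i' div 2 + 1 \<le> PL L" using vert_bounds(2)[OF ci'(2,3)] e QH[of L] by simp
    have "PL L - BL L c - i div 2 = PL L - BL L c' - i' div 2" using eq e by (simp add: lab_def ci ci')
    with b1 b2 have "BL L c + i div 2 = BL L c' + i' div 2" by linarith
    moreover have "i div 2 < L!c div 2" "i' div 2 < L!c' div 2"
      using e ci ci' by (auto elim!: oddE)
    ultimately have "c = c' \<and> i div 2 = i' div 2"
      using psum_inj[where w="\<lambda>d. L!d div 2"] unfolding BL_def by blast
    then show ?thesis using e ci ci' by (auto elim!: oddE)
  next
    assume e: "even i" "odd i'"
    then show ?thesis using lab_range(2)[OF u] lab_range(3)[OF v] eq ci ci' by simp
  next
    assume e: "odd i" "even i'"
    then show ?thesis using lab_range(3)[OF u] lab_range(2)[OF v] eq ci ci' by simp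
  qed
qed

lemma lab_num: "lab L \<in> numberings (cyc_verts L)"
proof -
  let ?V = "cyc_verts L"
  have sub: "lab L ` ?V \<subseteq> {1..PL L}" using lab_range(1) by auto
  have "card (lab L ` ?V) = card {1..PL L}"
    using card_image[OF lab_inj] card_verts by simp
  then have "lab L ` ?V = {1..PL L}" using sub by (intro card_subset_eq) auto
  then show ?thesis using lab_inj by (simp add: numberings_def bij_betw_def card_verts)
qed

lemma lab_edges:
  assumes L3: "\<forall>c<length L. L!c \<ge> 3"
    and sO: "\<forall>c<length L. PL L + 2 + OL L c \<le> s" and sK: "PL L + KL L \<le> s"
    and e: "(u,v) \<in> cyc_edges L"
  shows "lab L u + lab L v \<le> s"
proof -
  obtain c i where ci: "u = (c,i)" "v = (c, Suc i mod L!c)" "c < length L" "i < L!c"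
    using e by (auto simp: cyc_edges_def)
  define l where "l = L!c"
  define a where "a = AL L c"
  define b where "b = BL L c"
  define p where "p = PL L"
  have ab: "a = b + OL L c" using AB unfolding a_def b_def .
  have so: "p + 2 + OL L c \<le> s" using sO ci unfolding p_def by auto
  have l3: "l \<ge> 3" using L3 ci l_def by auto
  have il: "i < l" using ci l_def by simp
  have Q: "2 * AL L (length L) = p + KL L" using Q2 p_def by simp
  have hb: "odd j \<Longrightarrow> j < l \<Longrightarrow> b + j div 2 + 1 \<le> p" for j
    using vert_bounds(2)[OF ci(3), of j] QH[of L] unfolding b_def p_def l_def by simp
  have lb: "even j \<Longrightarrow> j < l \<Longrightarrow> a + j div 2 + 1 \<le> AL L (length L)" for j
    using vert_bounds(1)[OF ci(3), of j] unfolding a_def l_def by simp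
  have labe: "even j \<Longrightarrow> lab L (c,j) = a + j div 2 + 1" for j by (simp add: lab_def a_def)
  have labo: "odd j \<Longrightarrow> lab L (c,j) = p - b - j div 2" for j by (simp add: lab_def b_def p_def)
  show ?thesis
  proof (cases "Suc i = l")
    case True
    then have v0: "v = (c,0)" using ci l_def by simp
    show ?thesis
    proof (cases "even i")
      case ev: True
      have "a + i div 2 + 1 \<le> AL L (length L)" using lb[OF ev il] .
      moreover have "a + 2 \<le> AL L (length L)"
      proof -
        have "2 \<le> i" using True l3 by simp
        then have "1 \<le> i div 2" by simp
        then show ?thesis using lb[OF ev il] by linarith
      qed
      ultimately have "lab L u + lab L v \<le> 2 * AL L (length L) - 1"
        using labe[OF ev] labe[of 0] ci v0 by simp
      then show ?thesis using Q sK p_def by linarith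
    next
      case od: False
      have "lab L u + lab L v = p - b - i div 2 + (a + 1)" using labo[OF od] labe[of 0] ci v0 by simp
      then show ?thesis using hb[OF od il] ab so by linarith
    qed
  next
    case False
    then have si: "Suc i < l" using il by simp
    then have vs: "v = (c, Suc i)" using ci l_def by simp
    show ?thesis
    proof (cases "even i")
      case ev: True
      then have os: "odd (Suc i)" by simp
      have "lab L u + lab L v = a + i div 2 + 1 + (p - b - i div 2)"
        using labe[OF ev] labo[OF os] ci vs even_suc_div[OF ev] by simp
      then show ?thesis using hb[OF os si] even_suc_div[OF ev] ab so by linarith
    next
      case od: False
      then have es: "even (Suc i)" by simp
      have "lab L u + lab L v = p - b - i div 2 + (a + Suc i div 2 + 1)"
        using labo[OF od] labe[OF es] ci vs by simp
      then show ?thesis using hb[OF od il] odd_suc_div[OF od] ab so by linarith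
    qed
  qed
qed

lemma str_general:
  assumes L3: "\<forall>c<length L. L!c \<ge> 3" and ne: "length L \<ge> 1"
    and sdef: "s = max (PL L + 2) (PL L + 1 + KL L)"
    and sO: "\<forall>c<length L. PL L + 2 + OL L c \<le> s" and sK: "PL L + KL L \<le> s"
  shows "str (cyc_verts L) (cyc_edges L) = s"
proof -
  let ?V = "cyc_verts L" let ?E = "cyc_edges L" let ?p = "PL L"
  have "0 < length L" using ne by (cases L) auto
  then have "(0,0) \<in> ?V" using L3 by (auto simp: cyc_verts_def)
  then have Ene: "?E \<noteq> {}" unfolding edges_image by blast
  have fin: "finite (str_f ?E ` numberings ?V)"
  proof (rule finite_subset)
    show "str_f ?E ` numberings ?V \<subseteq> {..2 * ?p}"
    proof
      fix y assume "y \<in> str_f ?E ` numberings ?V"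
      then obtain f where f: "f \<in> numberings ?V" "y = str_f ?E f" by blast
      have "str_f ?E f \<le> 2 * ?p"
      proof (rule str_f_le[OF Ene])
        fix u v assume "(u,v) \<in> ?E"
        then have "u \<in> ?V" "v \<in> ?V" using edges_in by blast+
        then have "f u \<le> ?p" "f v \<le> ?p" using f(1)
          by (auto simp: numberings_def card_verts bij_betw_def)
        then show "f u + f v \<le> 2 * ?p" by simp
      qed
      then show "y \<in> {..2 * ?p}" using f by simp
    qed
  qed simp
  have lo: "s \<le> str_f ?E f" if "f \<in> numberings ?V" for f
    using lower_a[OF that L3 ne] lower_b[OF that L3 ne] sdef by simp
  have up: "str_f ?E (lab L) \<le> s"
    by (rule str_f_le[OF Ene]) (rule lab_edges[OF L3 sO sK])
  have "s \<in> str_f ?E ` numberings ?V"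
    using lo[OF lab_num] up lab_num by (intro image_eqI[of _ _ "lab L"]) auto
  then show ?thesis unfolding str_def using fin lo by (intro Min_eqI) auto
qed

lemma OL_spec:
  fixes ms ns :: "nat list"
  defines "L \<equiv> map (\<lambda>m. 2 * m) ms @ map (\<lambda>n. 2 * n + 1) ns"
  shows "c \<le> length L \<Longrightarrow> OL L c = c - length ms"
proof (induction c)
  case 0 then show ?case by (simp add: OL_def)
next
  case (Suc c)
  then have c: "c < length L" by simp
  have "OL L (Suc c) = OL L c + L!c mod 2" by (simp add: OL_def)
  moreover have "L!c mod 2 = (if c < length ms then 0 else 1)"
    using c unfolding L_def by (auto simp: nth_append)
  ultimately show ?case using Suc c by auto
qed

theorem mainTheorem13:
  fixes ms ns :: "nat list"
  assumes "length ms + length ns \<ge> 1"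
    and "\<forall>m \<in> set ms. m \<ge> 2"
    and "\<forall>n \<in> set ns. n \<ge> 1"
  shows "str (cyc_verts (map (\<lambda>m. 2 * m) ms @ map (\<lambda>n. 2 * n + 1) ns))
             (cyc_edges (map (\<lambda>m. 2 * m) ms @ map (\<lambda>n. 2 * n + 1) ns))
         = max (card (cyc_verts (map (\<lambda>m. 2 * m) ms @ map (\<lambda>n. 2 * n + 1) ns)) + 2)
               (card (cyc_verts (map (\<lambda>m. 2 * m) ms @ map (\<lambda>n. 2 * n + 1) ns)) + 1 + length ns)"
proof -
  define L where "L = map (\<lambda>m. 2 * m) ms @ map (\<lambda>n. 2 * n + 1) ns"
  have len: "length L = length ms + length ns" by (simp add: L_def)
  have L3: "\<forall>c<length L. L!c \<ge> 3"
  proof (intro allI impI)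
    fix c assume c: "c < length L"
    show "L!c \<ge> 3"
    proof (cases "c < length ms")
      case True
      then have "ms!c \<ge> 2" using assms(2) nth_mem by blast
      then show ?thesis using True by (simp add: L_def nth_append)
    next
      case False
      then have "c - length ms < length ns" using c len by simp
      then have "ns!(c - length ms) \<ge> 1" using assms(3) nth_mem by blast
      then show ?thesis using False c len by (simp add: L_def nth_append)
    qed
  qed
  have ne: "length L \<ge> 1" using len assms(1) by simp
  have K: "KL L = length ns"
    using OL_spec[of "length L" ms ns] len unfolding L_def KL_def OL_def by simp
  have O: "c \<le> length L \<Longrightarrow> OL L c = c - length ms" for c
    using OL_spec[of c ms ns] unfolding L_def by simp
  define s where "s = max (PL L + 2) (PL L + 1 + KL L)"
  have sO: "\<forall>c<length L. PL L + 2 + OL L c \<le> s"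
    using O len K unfolding s_def by fastforce
  have sK: "PL L + KL L \<le> s" unfolding s_def by simp
  have "str (cyc_verts L) (cyc_edges L) = s" by (rule str_general[OF L3 ne s_def sO sK])
  then show ?thesis unfolding L_def[symmetric] using card_verts[of L] K s_def by simp
qed

end
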